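(* Let $\Gamma$ be a maximal consistent set of SBTrust, and let $\varphi,\psi$ be propositional formulas with $\psi\notin\rightsquigarrow_\varphi(\Gamma)$. Then there exists a maximal consistent set $\Delta\in[\Gamma]_\leftrightsquigarrow$ such that $\{\neg\psi\}\cup\rightsquigarrow_\varphi(\Gamma)\subseteq\Delta$.
   Context: $\mathcal{L}_T$: $\alpha::=\varphi\mid\varphi\rightsquigarrow\varphi\mid B(\alpha)\mid\alpha*\alpha\mid\neg\alpha$, with $\varphi$ ranging over classical propositional formulas (built from variables, $\bot$, $\land,\lor,\to,\leftrightarrow,\neg$) and $*\in\{\land,\lor,\to,\leftrightarrow\}$. SBTrust is the Hilbert system ($\varphi,\psi,\chi,\varphi_i,\psi_i$ propositional; $\alpha,\beta\in\mathcal{L}_T$; rule outputs must lie in $\mathcal{L}_T$): classical tautologies and Modus Ponens; $\varphi\rightsquigarrow\varphi$; $(\varphi\rightsquigarrow\bot)\to\neg\varphi$; $((\psi\land\chi)\rightsquigarrow\varphi)\to(\psi\rightsquigarrow(\chi\to\varphi))$; $(\neg(\varphi\leftrightarrow\psi)\rightsquigarrow\bot)\to((\varphi\rightsquigarrow\chi)\leftrightarrow(\psi\rightsquigarrow\chi))$; rule RCK: from $(\varphi_1\land\dots\land\varphi_n)\to\varphi_{n+1}$ infer $\bigwedge_{j\le n}(\psi\rightsquigarrow\varphi_j)\to(\psi\rightsquigarrow\varphi_{n+1})$; rule $\mathbf{S5_F}$: from $(\ell_1\land\dots\land\ell_n)\to\chi$ infer $(\ell_1\land\dots\land\ell_n)\to(\neg\chi\rightsquigarrow\bot)$,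 each $\ell_j$ being $\varphi_j\rightsquigarrow\psi_j$ or its negation, $\chi$ propositional; $B(\alpha\to\beta)\to(B\alpha\to B\beta)$; $B\alpha\to\neg B\neg\alpha$; $B\alpha\to BB\alpha$; necessitation for $B$. A maximal consistent set (MCS) is $\Gamma\subseteq\mathcal{L}_T$ with $\Gamma\nvdash\bot$ and, for every $\alpha\in\mathcal{L}_T$, $\alpha\in\Gamma$ or $\neg\alpha\in\Gamma$. For $\Gamma\subseteq\mathcal{L}_T$: $\Gamma^\rightsquigarrow$ is the set of formulas of the form $\chi\rightsquigarrow\psi$ in $\Gamma$; for MCSs, $\Gamma\leftrightsquigarrow\Delta$ iff $\Gamma^\rightsquigarrow=\Delta^\rightsquigarrow$ (an equivalence relation), and $[\Gamma]_\leftrightsquigarrow$ is the equivalence class of $\Gamma$; $\rightsquigarrow_\varphi(\Gamma)=\{\psi:\varphi\rightsquigarrow\psi\in\Gamma\}$. *)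

theory Defs
  imports Main
begin

text \<open>A single syntax for both layers: propositional formulas are those
without conditionals and belief; L_T is the set of well-formed formulas.\<close>

datatype fm =
    Var nat
  | Bot
  | And fm fm
  | Or fm fm
  | Imp fm fm
  | Iff fm fm
  | Neg fm
  | Cond fm fm
  | Bel fm

fun propf :: "fm \<Rightarrow> bool" where
  "propf (Var n) = True"
| "propf Bot = True"
| "propf (And a b) = (propf a \<and> propf b)"
| "propf (Or a b) = (propf a \<and> propf b)"
| "propf (Imp a b) = (propf a \<and> propf b)"
| "propf (Iff a b) = (propf a \<and> propf b)"
| "propf (Neg a) = propf a"
| "propf (Cond a b) = False"
| "propf (Bel a) = False"

fun wf :: "fm \<Rightarrow> bool" where
  "wf (Var n) = True"
| "wf Bot = True"
| "wf (And a b) = (wf a \<and> wf b)"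
| "wf (Or a b) = (wf a \<and> wf b)"
| "wf (Imp a b) = (wf a \<and> wf b)"
| "wf (Iff a b) = (wf a \<and> wf b)"
| "wf (Neg a) = wf a"
| "wf (Cond a b) = (propf a \<and> propf b)"
| "wf (Bel a) = wf a"

fun eval :: "(fm \<Rightarrow> bool) \<Rightarrow> fm \<Rightarrow> bool" where
  "eval v (Var n) = v (Var n)"
| "eval v Bot = False"
| "eval v (And a b) = (eval v a \<and> eval v b)"
| "eval v (Or a b) = (eval v a \<or> eval v b)"
| "eval v (Imp a b) = (eval v a \<longrightarrow> eval v b)"
| "eval v (Iff a b) = (eval v a \<longleftrightarrow> eval v b)"
| "eval v (Neg a) = (\<not> eval v a)"
| "eval v (Cond a b) = v (Cond a b)"
| "eval v (Bel a) = v (Bel a)"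

definition tautology :: "fm \<Rightarrow> bool" where
  "tautology a \<longleftrightarrow> (\<forall>v. eval v a)"

definition Top :: fm where "Top = Neg Bot"

fun conj :: "fm list \<Rightarrow> fm" where
  "conj [] = Top"
| "conj [a] = a"
| "conj (a # b # xs) = And a (conj (b # xs))"

definition literal :: "fm \<Rightarrow> bool" where
  "literal l \<longleftrightarrow> (\<exists>a b. propf a \<and> propf b \<and> (l = Cond a b \<or> l = Neg (Cond a b)))"

inductive sbthm :: "fm \<Rightarrow> bool" where
  Taut: "wf a \<Longrightarrow> tautology a \<Longrightarrow> sbthm a"
| MP: "sbthm a \<Longrightarrow> sbthm (Imp a b) \<Longrightarrow> sbthm b"
| Id: "propf p \<Longrightarrow> sbthm (Cond p p)"
| CBot: "propf p \<Longrightarrow> sbthm (Imp (Cond p Bot) (Neg p))"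
| Exp: "propf p \<Longrightarrow> propf q \<Longrightarrow> propf c \<Longrightarrow>
          sbthm (Imp (Cond (And q c) p) (Cond q (Imp c p)))"
| Ext: "propf p \<Longrightarrow> propf q \<Longrightarrow> propf c \<Longrightarrow>
          sbthm (Imp (Cond (Neg (Iff p q)) Bot) (Iff (Cond p c) (Cond q c)))"
| RCK: "ps \<noteq> [] \<Longrightarrow> \<forall>x\<in>set ps. propf x \<Longrightarrow> propf p \<Longrightarrow> propf q \<Longrightarrow>
          sbthm (Imp (conj ps) p) \<Longrightarrow>
          sbthm (Imp (conj (map (Cond q) ps)) (Cond q p))"
| S5F: "ls \<noteq> [] \<Longrightarrow> \<forall>l\<in>set ls. literal l \<Longrightarrow> propf c \<Longrightarrow>
          sbthm (Imp (conj ls) c) \<Longrightarrow>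
          sbthm (Imp (conj ls) (Cond (Neg c) Bot))"
| KB: "wf a \<Longrightarrow> wf b \<Longrightarrow> sbthm (Imp (Bel (Imp a b)) (Imp (Bel a) (Bel b)))"
| DB: "wf a \<Longrightarrow> sbthm (Imp (Bel a) (Neg (Bel (Neg a))))"
| FourB: "wf a \<Longrightarrow> sbthm (Imp (Bel a) (Bel (Bel a)))"
| Nec: "sbthm a \<Longrightarrow> sbthm (Bel a)"

definition derives :: "fm set \<Rightarrow> fm \<Rightarrow> bool" where
  "derives G a \<longleftrightarrow> (\<exists>L. set L \<subseteq> G \<and> sbthm (foldr Imp L a))"

definition MCS :: "fm set \<Rightarrow> bool" where
  "MCS G \<longleftrightarrow> G \<subseteq> {a. wf a} \<and> \<not> derives G Bot \<and>
     (\<forall>a. wf a \<longrightarrow> a \<in> G \<or> Neg a \<in> G)"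

definition cond_part :: "fm set \<Rightarrow> fm set" where
  "cond_part G = {x \<in> G. \<exists>a b. x = Cond a b}"

definition cond_class :: "fm set \<Rightarrow> fm set set" where
  "cond_class G = {D. MCS D \<and> cond_part D = cond_part G}"

definition cons_of :: "fm \<Rightarrow> fm set \<Rightarrow> fm set" where
  "cons_of p G = {q. Cond p q \<in> G}"

end

theory Submission
  imports Defs
begin

lemma eval_foldr: "eval v (foldr Imp L a) = ((\<forall>x\<in>set L. eval v x) \<longrightarrow> eval v a)"
  by (induction L) auto

lemma wf_foldr: "wf (foldr Imp L a) = ((\<forall>x\<in>set L. wf x) \<and> wf a)"
  by (induction L) auto

lemma eval_conj: "eval v (conj xs) = (\<forall>x\<in>set xs. eval v x)"
  by (induction xs rule: conj.induct) (auto simp: Top_def)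

lemma wf_conj: "wf (conj xs) = (\<forall>x\<in>set xs. wf x)"
  by (induction xs rule: conj.induct) (auto simp: Top_def)

lemma propf_wf: "propf a \<Longrightarrow> wf a"
  by (induction a) auto

lemma sbthm_wf: "sbthm a \<Longrightarrow> wf a"
  by (induction rule: sbthm.induct) (auto simp: wf_conj propf_wf literal_def)

lemma taut_mp1:
  assumes "sbthm a" "wf c" "\<And>v. eval v a \<Longrightarrow> eval v c"
  shows "sbthm c"
proof -
  have "sbthm (Imp a c)"
    by (rule Taut) (use assms sbthm_wf in \<open>auto simp: tautology_def\<close>)
  then show ?thesis using assms(1) MP by blast
qed

lemma taut_mp2:
  assumes "sbthm a" "sbthm b" "wf c" "\<And>v. eval v a \<Longrightarrow> eval v b \<Longrightarrow> eval v c"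
  shows "sbthm c"
proof -
  have "sbthm (Imp a (Imp b c))"
    by (rule Taut) (use assms sbthm_wf in \<open>auto simp: tautology_def\<close>)
  then show ?thesis using assms(1,2) MP by blast
qed

lemma taut_mp0:
  assumes "wf c" "\<And>v. eval v c"
  shows "sbthm c"
  using assms by (intro Taut) (auto simp: tautology_def)

lemma MCS_neg: "MCS D \<Longrightarrow> x \<in> D \<Longrightarrow> Neg x \<in> D \<Longrightarrow> False"
proof -
  assume m: "MCS D" and x: "x \<in> D" "Neg x \<in> D"
  have w: "wf x" using m x unfolding MCS_def by auto
  have "sbthm (foldr Imp [x, Neg x] Bot)"
    by (rule taut_mp0) (auto simp: w)
  then have "derives D Bot" unfolding derives_def using x
    by (intro exI[of _ "[x, Neg x]"]) auto
  then show False using m unfolding MCS_def by auto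
qed

lemma MCS_closed:
  assumes m: "MCS G" and a: "sbthm a" and xs: "set xs \<subseteq> G" and wb: "wf b"
    and sem: "\<And>v. eval v a \<Longrightarrow> \<forall>x\<in>set xs. eval v x \<Longrightarrow> eval v b"
  shows "b \<in> G"
proof (rule ccontr)
  assume "b \<notin> G"
  then have nb: "Neg b \<in> G" using m wb unfolding MCS_def by auto
  have wx: "\<forall>x\<in>set xs. wf x" using xs m unfolding MCS_def by auto
  have "sbthm (foldr Imp (Neg b # xs) Bot)"
    by (rule taut_mp1[OF a]) (use wx wb sem in \<open>auto simp: wf_foldr eval_foldr\<close>)
  then have "derives G Bot" unfolding derives_def using xs nb
    by (intro exI[of _ "Neg b # xs"]) auto
  then show False using m unfolding MCS_def by auto
qed

lemma chain_fin:
  assumes "C \<noteq> {}" "\<forall>X\<in>C. \<forall>Y\<in>C. X \<subseteq> Y \<or> Y \<subseteq> X"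
  shows "set L \<subseteq> \<Union>C \<Longrightarrow> \<exists>X\<in>C. set L \<subseteq> X"
proof (induction L)
  case Nil then show ?case using assms(1) by auto
next
  case (Cons x L)
  then obtain X where X: "X \<in> C" "set L \<subseteq> X" by auto
  obtain Y where Y: "Y \<in> C" "x \<in> Y" using Cons.prems by auto
  show ?case using assms(2) X Y by (metis insert_subset list.simps(15) subset_trans)
qed

lemma lindenbaum:
  assumes sw: "S \<subseteq> {a. wf a}" and sc: "\<not> derives S Bot"
  shows "\<exists>D. MCS D \<and> S \<subseteq> D"
proof -
  define A where "A = {X. S \<subseteq> X \<and> X \<subseteq> {a. wf a} \<and> \<not> derives X Bot}"
  have "\<exists>M\<in>A. \<forall>X\<in>A. M \<subseteq> X \<longrightarrow> X = M"
  proof (rule subset_Zorn_nonempty)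
    show "A \<noteq> {}" using sw sc unfolding A_def by auto
  next
    fix C assume ne: "C \<noteq> {}" and ch: "subset.chain A C"
    have CA: "C \<subseteq> A" and tot: "\<forall>X\<in>C. \<forall>Y\<in>C. X \<subseteq> Y \<or> Y \<subseteq> X"
      using ch unfolding subset.chain_def by auto
    show "\<Union>C \<in> A"
      unfolding A_def
    proof (intro CollectI conjI)
      show "S \<subseteq> \<Union>C" using ne CA unfolding A_def by auto
      show "\<Union>C \<subseteq> {a. wf a}" using CA unfolding A_def by auto
      show "\<not> derives (\<Union>C) Bot"
      proof
        assume "derives (\<Union>C) Bot"
        then obtain L where L: "set L \<subseteq> \<Union>C" "sbthm (foldr Imp L Bot)"
          unfolding derives_def by auto
        obtain X where "X \<in> C" "set L \<subseteq> X" using chain_fin[OF ne tot L(1)] by auto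
        then have "derives X Bot" using L unfolding derives_def by auto
        then show False using \<open>X \<in> C\<close> CA unfolding A_def by auto
      qed
    qed
  qed
  then obtain M where MA: "M \<in> A" and mx: "\<forall>X\<in>A. M \<subseteq> X \<longrightarrow> X = M" by auto
  have Mw: "M \<subseteq> {a. wf a}" and Mc: "\<not> derives M Bot" and SM: "S \<subseteq> M"
    using MA unfolding A_def by auto
  have ext: "derives (insert b M) Bot" if "wf b" "b \<notin> M" for b
  proof (rule ccontr)
    assume "\<not> derives (insert b M) Bot"
    then have "insert b M \<in> A" using that Mw SM unfolding A_def by auto
    then show False using mx that by auto
  qed
  have "MCS M"
    unfolding MCS_def
  proof (intro conjI allI impI Mw Mc)
    fix a assume wa: "wf a"
    show "a \<in> M \<or> Neg a \<in> M"
    proof (rule ccontr)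
      assume "\<not> (a \<in> M \<or> Neg a \<in> M)"
      then have "derives (insert a M) Bot" "derives (insert (Neg a) M) Bot"
        using ext wa by auto
      then obtain L1 L2 where L1: "set L1 \<subseteq> insert a M" "sbthm (foldr Imp L1 Bot)"
        and L2: "set L2 \<subseteq> insert (Neg a) M" "sbthm (foldr Imp L2 Bot)"
        unfolding derives_def by auto
      define L where "L = filter (\<lambda>x. x \<noteq> a) L1 @ filter (\<lambda>x. x \<noteq> Neg a) L2"
      have LM: "set L \<subseteq> M" unfolding L_def using L1 L2 by auto
      have "sbthm (foldr Imp L Bot)"
      proof (rule taut_mp2[OF L1(2) L2(2)])
        show "wf (foldr Imp L Bot)" using LM Mw by (auto simp: wf_foldr)
      next
        fix v assume e1: "eval v (foldr Imp L1 Bot)" and e2: "eval v (foldr Imp L2 Bot)"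
        show "eval v (foldr Imp L Bot)"
        proof (cases "eval v a")
          case True then show ?thesis using e1 unfolding eval_foldr L_def by auto
        next
          case False then show ?thesis using e2 unfolding eval_foldr L_def by auto
        qed
      qed
      then have "derives M Bot" using LM unfolding derives_def by auto
      then show False using Mc by auto
    qed
  qed
  then show ?thesis using SM by auto
qed

theorem lemma1:
  assumes "MCS G" and "propf p" and "propf q" and "q \<notin> cons_of p G"
  shows "\<exists>D. MCS D \<and> D \<in> cond_class G \<and> insert (Neg q) (cons_of p G) \<subseteq> D"
proof -
  note m = assms(1)
  have Gw: "G \<subseteq> {a. wf a}" using m unfolding MCS_def by auto
  have cons_propf: "propf x" if "x \<in> cons_of p G" for x
    using that Gw unfolding cons_of_def by auto
  define S where "S = {x \<in> G. literal x} \<union> cons_of p G \<union> {Neg q}"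
  have Sw: "S \<subseteq> {a. wf a}" unfolding S_def using Gw cons_propf propf_wf assms(3) by auto
  have Sc: "\<not> derives S Bot"
  proof
    assume "derives S Bot"
    then obtain L where L: "set L \<subseteq> S" "sbthm (foldr Imp L Bot)"
      unfolding derives_def by auto
    have pp: "Cond p p \<in> G"
      using MCS_closed[OF m Id[OF assms(2)], of "[]"] assms(2) by auto
    define ls where "ls = Cond p p # filter literal L"
    define ps where "ps = filter (\<lambda>x. \<not> literal x \<and> x \<noteq> Neg q) L"
    have nlq0: "\<not> literal (Neg q)" using assms(3) unfolding literal_def by auto
    have lsG: "set ls \<subseteq> G"
    proof
      fix x assume "x \<in> set ls"
      then consider "x = Cond p p" | "x \<in> set L" "literal x" unfolding ls_def by auto
      then show "x \<in> G"
      proof cases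
        case 2
        then have "x \<in> S" using L(1) by auto
        moreover have "x \<notin> cons_of p G"
          using cons_propf 2(2) unfolding literal_def by force
        ultimately show ?thesis using 2(2) nlq0 unfolding S_def by auto
      qed (use pp in auto)
    qed
    have lslit: "\<forall>l\<in>set ls. literal l" unfolding ls_def literal_def using assms(2) by auto
    have nlq: "\<not> literal (Neg q)" using assms(3) unfolding literal_def by auto
    have psC: "set ps \<subseteq> cons_of p G" unfolding ps_def using L(1) unfolding S_def by auto
    have psP: "\<forall>x\<in>set ps. propf x" using psC cons_propf by auto
    define chi where "chi = foldr Imp ps q"
    have pchi: "propf chi" unfolding chi_def using psP assms(3) by (induction ps) auto
    have wls: "\<forall>x\<in>set ls. wf x" using lsG Gw by auto
    have s1: "sbthm (Imp (conj ls) (Iff p (And p chi)))"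
    proof (rule taut_mp1[OF L(2)])
      show "wf (Imp (conj ls) (Iff p (And p chi)))"
        using wls pchi assms(2) by (auto simp: wf_conj propf_wf)
    next
      fix v assume e: "eval v (foldr Imp L Bot)"
      show "eval v (Imp (conj ls) (Iff p (And p chi)))"
      proof (simp only: eval.simps eval_conj, intro impI)
        assume all: "\<forall>x\<in>set ls. eval v x"
        have "eval v chi"
          unfolding chi_def eval_foldr
        proof (intro impI)
          assume aps: "\<forall>x\<in>set ps. eval v x"
          show "eval v q"
          proof (rule ccontr)
            assume "\<not> eval v q"
            then have "\<forall>x\<in>set L. eval v x" using all aps unfolding ls_def ps_def by auto
            then show False using e by (simp add: eval_foldr)
          qed
        qed
        then show "eval v p = (eval v p \<and> eval v chi)" by simp
      qed
    qed
    have lsne: "ls \<noteq> []" unfolding ls_def by simp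
    have pc: "propf (Iff p (And p chi))" using assms(2) pchi by simp
    define B where "B = Cond (Neg (Iff p (And p chi))) Bot"
    have s2: "sbthm (Imp (conj ls) B)" unfolding B_def by (rule S5F[OF lsne lslit pc s1])
    have wB: "wf B" unfolding B_def using pc by simp
    have BG: "B \<in> G"
      by (rule MCS_closed[OF m s2 lsG wB]) (simp add: eval_conj)
    have s4: "sbthm (Imp B (Iff (Cond p chi) (Cond (And p chi) chi)))"
      unfolding B_def by (rule Ext) (use assms(2) pchi in auto)
    have pa: "propf (And p chi)" using assms(2) pchi by simp
    have s5a: "sbthm (Imp (conj (map (Cond (And p chi)) [And p chi])) (Cond (And p chi) chi))"
      by (rule RCK) (use pa pchi in \<open>auto intro!: taut_mp0 simp: propf_wf\<close>)
    have s5: "sbthm (Cond (And p chi) chi)"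
      using MP[OF Id[OF pa]] s5a by simp
    have s5G: "Cond (And p chi) chi \<in> G"
      using MCS_closed[OF m s5, of "[]"] pa pchi by (simp add: propf_wf)
    have cpchi: "Cond p chi \<in> G"
      by (rule MCS_closed[OF m s4, of "[B, Cond (And p chi) chi]"])
        (use BG s5G assms(2) pchi in auto)
    have s7: "sbthm (Imp (conj (map (Cond p) (chi # ps))) (Cond p q))"
    proof (rule RCK)
      show "\<forall>x\<in>set (chi # ps). propf x" using pchi psP by auto
      show "sbthm (Imp (conj (chi # ps)) q)"
        by (rule taut_mp0) (use pchi psP assms(3) in \<open>auto simp: wf_conj propf_wf eval_conj chi_def eval_foldr\<close>)
    qed (use assms in auto)
    have "Cond p q \<in> G"
      by (rule MCS_closed[OF m s7, of "map (Cond p) (chi # ps)"])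
        (use cpchi psC assms(2,3) in \<open>auto simp: cons_of_def eval_conj\<close>)
    then show False using assms(4) unfolding cons_of_def by auto
  qed
  obtain D where D: "MCS D" "S \<subseteq> D" using lindenbaum[OF Sw Sc] by auto
  have Dw: "D \<subseteq> {a. wf a}" using D(1) unfolding MCS_def by auto
  have "cond_part D = cond_part G"
  proof
    show "cond_part D \<subseteq> cond_part G"
    proof
      fix x assume "x \<in> cond_part D"
      then obtain a b where x: "x = Cond a b" "x \<in> D" unfolding cond_part_def by auto
      have ab: "propf a" "propf b" using x Dw by auto
      show "x \<in> cond_part G"
      proof (rule ccontr)
        assume "x \<notin> cond_part G"
        then have "x \<notin> G" using x unfolding cond_part_def by auto
        moreover have "wf x" using x ab by simp
        ultimately have "Neg x \<in> G" using m unfolding MCS_def by blast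
        then have "Neg x \<in> D" using D(2) ab x unfolding S_def literal_def by auto
        then show False using MCS_neg[OF D(1) x(2)] by auto
      qed
    qed
  next
    show "cond_part G \<subseteq> cond_part D"
    proof
      fix x assume "x \<in> cond_part G"
      then obtain a b where x: "x = Cond a b" "x \<in> G" unfolding cond_part_def by auto
      have ab: "propf a" "propf b" using x Gw by auto
      have "x \<in> D" using D(2) ab x unfolding S_def literal_def by auto
      then show "x \<in> cond_part D" using x unfolding cond_part_def by auto
    qed
  qed
  then show ?thesis using D unfolding cond_class_def S_def by auto
qed

end
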